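(* Let $a>1$ and for $\ell=0,1,\dots$ let $\Phi_{\ell,a}(z)=\mathcal{B}\left(\frac{\mathtt{H}_\ell}{\sqrt{\ell!}}\right)(z)$, where $\mathtt{H}_\ell(x)=h_\ell(x)e^{iax}$. Let $T_a=\frac{\partial}{\partial z}-\frac{ia}{\sqrt2}$. Then for every $\ell\geq1$ and $z\in\mathbb{C}$, $T_a\Phi_{\ell,a}(z)=\Phi_{\ell-1,a}(z)$, i.e. $(\Phi_{\ell,a})_{\ell\ge0}$ is an Appell system with respect to $T_a$.
   Context: $h_\ell(x)=(2^\ell\ell!\sqrt\pi)^{-1/2}H_\ell(x)e^{-x^2/2}$ are the normalized Hermite functions ($H_\ell$ the Hermite polynomials). $\mathcal{B}(\varphi)(z)=\pi^{-1/4}\int_{\mathbb{R}}e^{-\frac12(z^2+x^2)+\sqrt2 zx}\varphi(x)\,dx$ is the Segal-Bargmann transform. *)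

theory Defs
  imports "HOL-Analysis.Analysis"
begin

fun hermite_poly :: "nat \<Rightarrow> real \<Rightarrow> real" where
  "hermite_poly 0 x = 1"
| "hermite_poly (Suc 0) x = 2 * x"
| "hermite_poly (Suc (Suc n)) x = 2 * x * hermite_poly (Suc n) x - 2 * real (Suc n) * hermite_poly n x"

definition hermite_fun :: "nat \<Rightarrow> real \<Rightarrow> real" where
  "hermite_fun l x = (2 ^ l * fact l * sqrt pi) powr (-1/2) * hermite_poly l x * exp (- (x ^ 2) / 2)"

definition bargmann :: "(real \<Rightarrow> complex) \<Rightarrow> complex \<Rightarrow> complex" where
  "bargmann \<phi> z = complex_of_real (pi powr (-1/4)) *
     (\<integral>x. exp (- (z ^ 2 + complex_of_real (x ^ 2)) / 2 + complex_of_real (sqrt 2) * z * complex_of_real x) * \<phi> x \<partial>lborel)"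

definition mod_hermite :: "real \<Rightarrow> nat \<Rightarrow> real \<Rightarrow> complex" where
  "mod_hermite a l x = complex_of_real (hermite_fun l x) * exp (\<i> * complex_of_real (a * x))"

definition Phi :: "nat \<Rightarrow> real \<Rightarrow> complex \<Rightarrow> complex" where
  "Phi l a = bargmann (\<lambda>x. mod_hermite a l x / complex_of_real (sqrt (fact l)))"

end

theory Submission
  imports Defs "HOL-Probability.Probability" "HOL-Real_Asymp.Real_Asymp"
begin


lemma e1: fixes p q :: real
  shows "(complex_of_real p + \<i> * complex_of_real q)^2/4 = (complex_of_real (p^2/4) + \<i> * complex_of_real (q*p/2)) + complex_of_real (-((q / sqrt 2)^2)/2)"
proof -
  have "(q / sqrt 2)^2 = q^2/2" by (simp add: power_divide)
  then show ?thesis by (simp add: power2_eq_square field_simps)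
qed
lemma e2: fixes p q y :: real
  shows "- complex_of_real ((p/2 + (1/sqrt 2) * y)^2) + (complex_of_real p + \<i> * complex_of_real q) * complex_of_real (p/2 + (1/sqrt 2) * y)
      = (complex_of_real (p^2/4) + \<i> * complex_of_real (q*p/2)) +
        (complex_of_real (-(y^2)/2) + \<i> * complex_of_real ((q / sqrt 2) * y))"
proof -
  have s: "sqrt 2 * sqrt 2 = (2::real)" by simp
  have r: "(p/2 + (1/sqrt 2) * y)^2 = p^2/4 + p*y/sqrt 2 + y^2/2"
    by (simp add: power2_eq_square field_simps s)
  show ?thesis unfolding r by (simp add: field_simps power2_eq_square)
qed


lemma gauss_char:
  "(\<integral>y. complex_of_real (exp (-(y^2)/2)) * exp (\<i> * complex_of_real (t*y)) \<partial>lborel)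
     = complex_of_real (sqrt (2*pi) * exp (-(t^2)/2))"
proof -
  have "char std_normal_distribution t = complex_of_real (exp (-(t^2)/2))"
    by (simp add: char_std_normal_distribution)
  also have "char std_normal_distribution t = (\<integral>x. std_normal_density x *\<^sub>R iexp (t*x) \<partial>lborel)"
    unfolding char_def by (subst integral_density) (auto simp: normal_density_nonneg)
  also have "\<dots> = (\<integral>x. (1 / sqrt (2*pi)) *\<^sub>R (complex_of_real (exp (-(x^2)/2)) * iexp (t*x)) \<partial>lborel)"
    by (intro Bochner_Integration.integral_cong) (auto simp: std_normal_density_def scaleR_conv_of_real)
  also have "\<dots> = (1 / sqrt (2*pi)) *\<^sub>R (\<integral>x. complex_of_real (exp (-(x^2)/2)) * iexp (t*x) \<partial>lborel)"
    by simp
  finally show ?thesis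
    by (simp add: scaleR_conv_of_real field_simps)
qed



lemma integrable_by_bound:
  fixes f :: "real \<Rightarrow> 'b::{banach, second_countable_topology}"
  assumes "integrable lborel g" "f \<in> borel_measurable lborel" "\<And>x. norm (f x) \<le> g x"
  shows "integrable lborel f"
proof (rule Bochner_Integration.integrable_bound[OF assms(1) assms(2)])
  have "norm (f x) \<le> norm (g x)" for x
    using assms(3)[of x] by (metis abs_ge_self order_trans real_norm_def)
  then show "AE x in lborel. norm (f x) \<le> norm (g x)" by (rule AE_I2)
qed

lemma integrable_exp_half: "integrable lborel (\<lambda>y::real. exp (-(y^2)/2))"
proof -
  have "integrable lborel (\<lambda>y. sqrt (2*pi) * std_normal_density y)" by simp
  moreover have "sqrt (2*pi) * std_normal_density y = exp (-(y^2)/2)" for y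
    by (simp add: std_normal_density_def)
  ultimately show ?thesis by simp
qed

lemma gauss_shift_eq:
  fixes b :: complex and y :: real
  defines "p \<equiv> Re b" and "q \<equiv> Im b"
  shows "exp (- complex_of_real ((p/2 + (1/sqrt 2) * y)^2) + b * complex_of_real (p/2 + (1/sqrt 2) * y))
    = exp (complex_of_real (p^2/4) + \<i> * complex_of_real (q*p/2)) *
      (complex_of_real (exp (-(y^2)/2)) * exp (\<i> * complex_of_real ((q / sqrt 2) * y)))"
proof -
  have b: "b = complex_of_real p + \<i> * complex_of_real q" unfolding p_def q_def
    by (simp add: complex_eq_iff)
  have "- complex_of_real ((p/2 + (1/sqrt 2) * y)^2) + b * complex_of_real (p/2 + (1/sqrt 2) * y)
      = (complex_of_real (p^2/4) + \<i> * complex_of_real (q*p/2)) +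
        (complex_of_real (-(y^2)/2) + \<i> * complex_of_real ((q / sqrt 2) * y))"
    unfolding b by (rule e2)
  then show ?thesis
    by (simp only: exp_add exp_of_real)
qed


lemma gauss_complex:
  fixes b :: complex
  shows "integrable lborel (\<lambda>x. exp (- complex_of_real (x^2) + b * complex_of_real x))"
    and "(\<integral>x. exp (- complex_of_real (x^2) + b * complex_of_real x) \<partial>lborel)
           = complex_of_real (sqrt pi) * exp (b^2/4)"
proof -
  define p where "p = Re b"
  define q where "q = Im b"
  define f where "f = (\<lambda>x. exp (- complex_of_real (x^2) + b * complex_of_real x))"
  define C where "C = exp (complex_of_real (p^2/4) + \<i> * complex_of_real (q*p/2))"
  have c0: "(1 / sqrt 2 :: real) \<noteq> 0" by simp
  have feq: "(\<lambda>y. f (p/2 + (1/sqrt 2) * y)) =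
     (\<lambda>y. C * (complex_of_real (exp (-(y^2)/2)) * exp (\<i> * complex_of_real ((q / sqrt 2) * y))))"
    unfolding f_def C_def p_def q_def by (rule ext, rule gauss_shift_eq)
  have "integrable lborel (\<lambda>y. complex_of_real (exp (-(y^2)/2)) * exp (\<i> * complex_of_real ((q / sqrt 2) * y)))"
    by (rule integrable_by_bound[OF integrable_exp_half]) (auto simp: norm_mult)
  then have "integrable lborel (\<lambda>y. f (p/2 + (1/sqrt 2) * y))"
    unfolding feq by simp
  then show "integrable lborel f"
    using lborel_integrable_real_affine_iff[OF c0] unfolding f_def by blast
  have "integral\<^sup>L lborel f = \<bar>1/sqrt 2\<bar> *\<^sub>R (\<integral>y. f (p/2 + (1/sqrt 2) * y) \<partial>lborel)"
    by (rule lborel_integral_real_affine[OF c0])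
  also have "\<dots> = (1/sqrt 2) *\<^sub>R (C * (\<integral>y. complex_of_real (exp (-(y^2)/2)) * exp (\<i> * complex_of_real ((q / sqrt 2) * y)) \<partial>lborel))"
  proof -
    have "\<bar>1/sqrt 2\<bar> = (1/sqrt 2::real)" by simp
    then show ?thesis by (simp only: feq integral_mult_right_zero)
  qed
  also have "\<dots> = (1/sqrt 2) *\<^sub>R (C * complex_of_real (sqrt (2*pi) * exp (-((q / sqrt 2)^2)/2)))"
    by (simp only: gauss_char)
  also have "\<dots> = complex_of_real (sqrt pi) * exp (b^2/4)"
  proof -
    have b: "b = complex_of_real p + \<i> * complex_of_real q" unfolding p_def q_def
      by (simp add: complex_eq_iff)
    have e: "b^2/4 = (complex_of_real (p^2/4) + \<i> * complex_of_real (q*p/2)) + complex_of_real (-((q / sqrt 2)^2)/2)"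
      unfolding b by (rule e1)
    have "(1/sqrt 2) *\<^sub>R (C * complex_of_real (sqrt (2*pi) * exp (-((q / sqrt 2)^2)/2)))
        = complex_of_real ((1/sqrt 2) * sqrt (2*pi)) * (C * complex_of_real (exp (-((q / sqrt 2)^2)/2)))"
      by (simp only: scaleR_conv_of_real of_real_mult mult_ac)
    also have "(1/sqrt 2) * sqrt (2*pi) = sqrt pi" by (simp add: real_sqrt_mult)
    also have "C * complex_of_real (exp (-((q / sqrt 2)^2)/2)) = exp (b^2/4)"
      unfolding e C_def by (simp only: exp_add exp_of_real)
    finally show ?thesis .
  qed
  finally show "integral\<^sup>L lborel f = complex_of_real (sqrt pi) * exp (b^2/4)" .
qed




definition dH :: "nat \<Rightarrow> real \<Rightarrow> real" where
  "dH l x = 2 * real l * hermite_poly (l - 1) x"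

lemma H_rec: "hermite_poly (Suc l) x = 2 * x * hermite_poly l x - dH l x"
  by (cases l) (auto simp: dH_def)

lemma twostep: "P 0 \<Longrightarrow> P (Suc 0) \<Longrightarrow> (\<And>n. P (Suc n) \<Longrightarrow> P n \<Longrightarrow> P (Suc (Suc n))) \<Longrightarrow> P n"
proof -
  assume a: "P 0" "P (Suc 0)" "\<And>n. P (Suc n) \<Longrightarrow> P n \<Longrightarrow> P (Suc (Suc n))"
  have "P n \<and> P (Suc n)" by (induction n) (use a in auto)
  then show "P n" by blast
qed

lemma H_deriv: "(hermite_poly l has_real_derivative dH l x) (at x)"
proof (induction l arbitrary: x rule: twostep)
  case 1
  then show ?case by (simp add: dH_def)
next
  case 2
  then show ?case by (auto simp: dH_def intro!: derivative_eq_intros)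
next
  case (3 n)
  have "((\<lambda>x. 2 * x * hermite_poly (Suc n) x - 2 * real (Suc n) * hermite_poly n x) has_real_derivative
      (2 * hermite_poly (Suc n) x + 2 * x * dH (Suc n) x - 2 * real (Suc n) * dH n x)) (at x)"
    by (auto intro!: derivative_eq_intros 3)
  moreover have "2 * hermite_poly (Suc n) x + 2 * x * dH (Suc n) x - 2 * real (Suc n) * dH n x = dH (Suc (Suc n)) x"
  proof -
    have d1: "dH (Suc n) x = 2 * real (Suc n) * hermite_poly n x" by (simp add: dH_def)
    have d2: "dH (Suc (Suc n)) x = 2 * real (Suc (Suc n)) * hermite_poly (Suc n) x" by (simp add: dH_def)
    have "2 * hermite_poly (Suc n) x + 2 * x * dH (Suc n) x - 2 * real (Suc n) * dH n x
        = 2 * hermite_poly (Suc n) x + 2 * real (Suc n) * (2 * x * hermite_poly n x - dH n x)"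
      unfolding d1 by (simp add: algebra_simps)
    also have "\<dots> = 2 * hermite_poly (Suc n) x + 2 * real (Suc n) * hermite_poly (Suc n) x"
      using H_rec[of n x] by simp
    also have "\<dots> = dH (Suc (Suc n)) x" unfolding d2 by (simp add: algebra_simps)
    finally show ?thesis .
  qed
  ultimately show ?case by simp
qed

lemma H_cont[continuous_intros]: "continuous_on S (hermite_poly l)"
  by (meson DERIV_isCont H_deriv continuous_at_imp_continuous_on)

lemma H_bound: "\<exists>D\<ge>0. \<forall>x. \<bar>hermite_poly l x\<bar> \<le> D * exp (real l * \<bar>x\<bar>)"
proof (induction l rule: twostep)
  case 1
  then show ?case by (auto intro!: exI[of _ 1])
next
  case 2
  show ?case
  proof (intro exI[of _ 2] conjI allI)
    fix x :: real
    have "\<bar>x\<bar> \<le> exp \<bar>x\<bar>" using exp_ge_add_one_self[of "\<bar>x\<bar>"] by linarith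
    then show "\<bar>hermite_poly (Suc 0) x\<bar> \<le> 2 * exp (real (Suc 0) * \<bar>x\<bar>)" by (simp add: abs_mult)
  qed simp
next
  case (3 n)
  obtain D1 where D1: "D1 \<ge> 0" "\<And>x. \<bar>hermite_poly (Suc n) x\<bar> \<le> D1 * exp (real (Suc n) * \<bar>x\<bar>)"
    using 3(1) by blast
  obtain D0 where D0: "D0 \<ge> 0" "\<And>x. \<bar>hermite_poly n x\<bar> \<le> D0 * exp (real n * \<bar>x\<bar>)"
    using 3(2) by blast
  show ?case
  proof (intro exI[of _ "2 * D1 + 2 * real (Suc n) * D0"] conjI allI)
    fix x :: real
    define E where "E = exp (real (Suc (Suc n)) * \<bar>x\<bar>)"
    have ax: "\<bar>x\<bar> \<le> exp \<bar>x\<bar>" using exp_ge_add_one_self[of "\<bar>x\<bar>"] by linarith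
    have e1: "\<bar>x\<bar> * exp (real (Suc n) * \<bar>x\<bar>) \<le> E"
    proof -
      have "\<bar>x\<bar> * exp (real (Suc n) * \<bar>x\<bar>) \<le> exp \<bar>x\<bar> * exp (real (Suc n) * \<bar>x\<bar>)"
        by (rule mult_right_mono[OF ax]) simp
      also have "\<dots> = E" unfolding E_def by (simp add: exp_add[symmetric] algebra_simps)
      finally show ?thesis .
    qed
    have "real n * \<bar>x\<bar> \<le> real (Suc (Suc n)) * \<bar>x\<bar>" by (intro mult_right_mono) auto
    then have e0: "exp (real n * \<bar>x\<bar>) \<le> E" unfolding E_def by simp
    have "\<bar>hermite_poly (Suc (Suc n)) x\<bar> \<le> 2 * \<bar>x\<bar> * \<bar>hermite_poly (Suc n) x\<bar> + 2 * real (Suc n) * \<bar>hermite_poly n x\<bar>"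
    proof -
      have "\<bar>hermite_poly (Suc (Suc n)) x\<bar> = \<bar>2 * x * hermite_poly (Suc n) x - 2 * real (Suc n) * hermite_poly n x\<bar>" by simp
      also have "\<dots> \<le> \<bar>2 * x * hermite_poly (Suc n) x\<bar> + \<bar>2 * real (Suc n) * hermite_poly n x\<bar>" by (rule abs_triangle_ineq4)
      also have "\<dots> = 2 * \<bar>x\<bar> * \<bar>hermite_poly (Suc n) x\<bar> + 2 * real (Suc n) * \<bar>hermite_poly n x\<bar>" by (simp add: abs_mult)
      finally show ?thesis .
    qed
    also have "\<dots> \<le> 2 * \<bar>x\<bar> * (D1 * exp (real (Suc n) * \<bar>x\<bar>)) + 2 * real (Suc n) * (D0 * exp (real n * \<bar>x\<bar>))"
      by (intro add_mono mult_left_mono D1 D0) auto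
    also have "\<dots> = 2 * D1 * (\<bar>x\<bar> * exp (real (Suc n) * \<bar>x\<bar>)) + 2 * real (Suc n) * D0 * exp (real n * \<bar>x\<bar>)"
      by (simp add: algebra_simps)
    also have "\<dots> \<le> 2 * D1 * E + 2 * real (Suc n) * D0 * E"
      using D0 D1 by (intro add_mono mult_left_mono e1 e0) auto
    finally show "\<bar>hermite_poly (Suc (Suc n)) x\<bar> \<le> (2 * D1 + 2 * real (Suc n) * D0) * exp (real (Suc (Suc n)) * \<bar>x\<bar>)"
      by (simp add: E_def algebra_simps)
  qed (use D0 D1 in auto)
qed



definition EB :: "(real \<Rightarrow> complex) \<Rightarrow> bool" where
  "EB g \<longleftrightarrow> (\<exists>D m. D \<ge> 0 \<and> (\<forall>x. norm (g x) \<le> D * exp (m * \<bar>x\<bar>)))"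

lemma EB_add: assumes "EB f" "EB g" shows "EB (\<lambda>x. f x + g x)"
proof -
  obtain D1 m1 where 1: "D1 \<ge> 0" "\<And>x. norm (f x) \<le> D1 * exp (m1 * \<bar>x\<bar>)" using assms(1) unfolding EB_def by blast
  obtain D2 m2 where 2: "D2 \<ge> 0" "\<And>x. norm (g x) \<le> D2 * exp (m2 * \<bar>x\<bar>)" using assms(2) unfolding EB_def by blast
  have bd: "norm (f x + g x) \<le> (D1 + D2) * exp (max m1 m2 * \<bar>x\<bar>)" for x
  proof -
    have a: "exp (m1 * \<bar>x\<bar>) \<le> exp (max m1 m2 * \<bar>x\<bar>)" "exp (m2 * \<bar>x\<bar>) \<le> exp (max m1 m2 * \<bar>x\<bar>)"
      by (auto intro: mult_right_mono)
    have "norm (f x + g x) \<le> D1 * exp (m1 * \<bar>x\<bar>) + D2 * exp (m2 * \<bar>x\<bar>)"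
      by (rule order_trans[OF norm_triangle_ineq add_mono[OF 1(2) 2(2)]])
    also have "\<dots> \<le> D1 * exp (max m1 m2 * \<bar>x\<bar>) + D2 * exp (max m1 m2 * \<bar>x\<bar>)"
      using 1(1) 2(1) a by (intro add_mono mult_left_mono) auto
    finally show "norm (f x + g x) \<le> (D1 + D2) * exp (max m1 m2 * \<bar>x\<bar>)" by (simp add: algebra_simps)
  qed
  show ?thesis unfolding EB_def using 1 2 bd by (intro exI[of _ "D1 + D2"] exI[of _ "max m1 m2"]) auto
qed

lemma EB_mult: assumes "EB f" "EB g" shows "EB (\<lambda>x. f x * g x)"
proof -
  obtain D1 m1 where 1: "D1 \<ge> 0" "\<And>x. norm (f x) \<le> D1 * exp (m1 * \<bar>x\<bar>)" using assms(1) unfolding EB_def by blast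
  obtain D2 m2 where 2: "D2 \<ge> 0" "\<And>x. norm (g x) \<le> D2 * exp (m2 * \<bar>x\<bar>)" using assms(2) unfolding EB_def by blast
  have bd: "norm (f x * g x) \<le> (D1 * D2) * exp ((m1 + m2) * \<bar>x\<bar>)" for x
  proof -
    have "norm (f x * g x) \<le> (D1 * exp (m1 * \<bar>x\<bar>)) * (D2 * exp (m2 * \<bar>x\<bar>))"
      unfolding norm_mult by (intro mult_mono 1 2) (use 1 in auto)
    also have "\<dots> = (D1 * D2) * exp ((m1 + m2) * \<bar>x\<bar>)" by (simp add: exp_add[symmetric] algebra_simps)
    finally show "norm (f x * g x) \<le> (D1 * D2) * exp ((m1 + m2) * \<bar>x\<bar>)" .
  qed
  show ?thesis unfolding EB_def using 1 2 bd by (intro exI[of _ "D1 * D2"] exI[of _ "m1 + m2"]) auto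
qed

lemma EB_const: "EB (\<lambda>x. c)"
  unfolding EB_def by (intro exI[of _ "norm c"] exI[of _ 0]) auto

lemma EB_x: "EB (\<lambda>x. complex_of_real x)"
proof -
  have "\<bar>x\<bar> \<le> exp \<bar>x\<bar>" for x :: real using exp_ge_add_one_self[of "\<bar>x\<bar>"] by linarith
  then show ?thesis unfolding EB_def by (intro exI[of _ 1] exI[of _ 1]) auto
qed

lemma EB_real: assumes "D \<ge> 0" "\<And>x. \<bar>f x\<bar> \<le> D * exp (m * \<bar>x\<bar>)" shows "EB (\<lambda>x. complex_of_real (f x))"
  unfolding EB_def using assms by auto

lemma tend_top: "((\<lambda>x::real. D * exp (-(x^2) + c * x)) \<longlongrightarrow> 0) at_top"
  by real_asymp

lemma tend_bot: "((\<lambda>x::real. D * exp (-(x^2) + c * x)) \<longlongrightarrow> 0) at_bot"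
  by real_asymp



definition GE :: "complex \<Rightarrow> real \<Rightarrow> complex" where
  "GE b x = exp (- complex_of_real (x^2) + b * complex_of_real x)"

lemma GE_cont[continuous_intros]: "continuous_on S (GE b)"
  unfolding GE_def by (intro continuous_intros)

lemma GE_norm: "norm (GE b x) = exp (-(x^2) + Re b * x)"
  unfolding GE_def norm_exp_eq_Re by simp

lemma integrable_GE_real: fixes c :: real shows "integrable lborel (\<lambda>x. exp (-(x^2) + c * x))"
proof -
  have "integrable lborel (\<lambda>x. norm (GE (complex_of_real c) x))"
    unfolding GE_def by (rule integrable_norm[OF gauss_complex(1)])
  then show ?thesis by (simp add: GE_norm)
qed

lemma cont_isCont: "continuous_on UNIV h \<Longrightarrow> isCont h x"
  by (metis continuous_on_eq_continuous_at open_UNIV UNIV_I)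

lemma EB_integrable:
  assumes "EB g" "continuous_on UNIV g"
  shows "integrable lborel (\<lambda>x. g x * GE b x)"
proof -
  obtain D m where D: "D \<ge> 0" "\<And>x. norm (g x) \<le> D * exp (m * \<bar>x\<bar>)"
    using assms(1) unfolding EB_def by blast
  define p where "p = Re b"
  let ?G = "\<lambda>x. D * (exp (-(x^2) + (p + m) * x) + exp (-(x^2) + (p - m) * x))"
  have int: "integrable lborel ?G"
    by (intro integrable_mult_right Bochner_Integration.integrable_add integrable_GE_real)
  have meas: "(\<lambda>x. g x * GE b x) \<in> borel_measurable lborel"
    using assms(2) by (simp add: borel_measurable_continuous_onI continuous_intros)
  have bd: "norm (g x * GE b x) \<le> ?G x" for x
  proof -
    have "norm (g x * GE b x) \<le> D * exp (m * \<bar>x\<bar>) * exp (-(x^2) + p * x)"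
      unfolding norm_mult GE_norm p_def by (intro mult_right_mono D) auto
    also have "\<dots> = D * exp (-(x^2) + p * x + m * \<bar>x\<bar>)"
      by (simp add: algebra_simps flip: exp_add)
    also have "\<dots> \<le> ?G x"
    proof (cases "x \<ge> 0")
      case True
      then have eq: "exp (-(x^2) + p * x + m * \<bar>x\<bar>) = exp (-(x^2) + (p + m) * x)"
        by (simp add: algebra_simps)
      have "exp (-(x^2) + p * x + m * \<bar>x\<bar>) \<le> exp (-(x^2) + (p + m) * x) + exp (-(x^2) + (p - m) * x)"
        by (subst eq) simp
      then show ?thesis by (rule mult_left_mono[OF _ D(1)])
    next
      case False
      then have eq: "exp (-(x^2) + p * x + m * \<bar>x\<bar>) = exp (-(x^2) + (p - m) * x)"
        by (simp add: algebra_simps)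
      have "exp (-(x^2) + p * x + m * \<bar>x\<bar>) \<le> exp (-(x^2) + (p + m) * x) + exp (-(x^2) + (p - m) * x)"
        by (subst eq) simp
      then show ?thesis by (rule mult_left_mono[OF _ D(1)])
    qed
    finally show ?thesis .
  qed
  show ?thesis
    by (rule integrable_by_bound[OF int meas bd])
qed

lemma EB_tendsto:
  assumes "EB g"
  shows "((\<lambda>x. g x * GE b x) \<longlongrightarrow> 0) at_top" "((\<lambda>x. g x * GE b x) \<longlongrightarrow> 0) at_bot"
proof -
  obtain D m where D: "D \<ge> 0" "\<And>x. norm (g x) \<le> D * exp (m * \<bar>x\<bar>)"
    using assms(1) unfolding EB_def by blast
  define p where "p = Re b"
  have bd: "norm (g x * GE b x) \<le> D * exp (-(x^2) + p * x + m * \<bar>x\<bar>)" for x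
  proof -
    have "norm (g x * GE b x) \<le> D * exp (m * \<bar>x\<bar>) * exp (-(x^2) + p * x)"
      unfolding norm_mult GE_norm p_def by (intro mult_right_mono D) auto
    also have "\<dots> = D * exp (-(x^2) + p * x + m * \<bar>x\<bar>)"
      by (simp add: algebra_simps flip: exp_add)
    finally show ?thesis .
  qed
  show "((\<lambda>x. g x * GE b x) \<longlongrightarrow> 0) at_top"
  proof (rule Lim_null_comparison[OF _ tend_top[of D "p + m"]])
    show "\<forall>\<^sub>F x in at_top. norm (g x * GE b x) \<le> D * exp (-(x^2) + (p + m) * x)"
      using eventually_ge_at_top[of 0]
    proof eventually_elim
      case (elim x)
      then show ?case using bd[of x] by (simp add: algebra_simps)
    qed
  qed
  show "((\<lambda>x. g x * GE b x) \<longlongrightarrow> 0) at_bot"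
  proof (rule Lim_null_comparison[OF _ tend_bot[of D "p - m"]])
    show "\<forall>\<^sub>F x in at_bot. norm (g x * GE b x) \<le> D * exp (-(x^2) + (p - m) * x)"
      using eventually_le_at_bot[of 0]
    proof eventually_elim
      case (elim x)
      then show ?case using bd[of x] by (simp add: algebra_simps)
    qed
  qed
qed

lemma EB_diff: "EB f \<Longrightarrow> EB g \<Longrightarrow> EB (\<lambda>x. f x - g x)"
  using EB_add[of f "\<lambda>x. (-1) * g x"] EB_mult[OF EB_const[of "-1"], of g] by simp

lemma GE_deriv: "(GE b has_vector_derivative ((b - 2 * complex_of_real x) * GE b x)) (at x)"
proof -
  have "((\<lambda>w. exp (- (w^2) + b * w)) has_field_derivative (exp (- ((complex_of_real x)^2) + b * complex_of_real x) * (b - 2 * complex_of_real x))) (at (complex_of_real x))"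
    by (auto intro!: derivative_eq_intros simp: algebra_simps)
  from has_vector_derivative_real_field[OF this]
  show ?thesis unfolding GE_def by (simp add: algebra_simps)
qed

lemma ibp:
  assumes der: "\<And>x. (g has_vector_derivative g' x) (at x)"
    and "EB g" "EB g'" and cg: "continuous_on UNIV g" and cg': "continuous_on UNIV g'"
  shows "(\<integral>x. (g' x + (b - 2 * complex_of_real x) * g x) * GE b x \<partial>lborel) = 0"
proof -
  define F where "F = (\<lambda>x. g x * GE b x)"
  define h where "h = (\<lambda>x. g' x + (b - 2 * complex_of_real x) * g x)"
  have EBh: "EB h" unfolding h_def
    by (intro EB_add EB_mult EB_diff EB_const EB_x assms)
  have ch: "continuous_on UNIV h" unfolding h_def using cg cg' by (intro continuous_intros)
  have dF: "(F has_vector_derivative h x * GE b x) (at x)" for x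
  proof -
    have "(F has_vector_derivative (g x * ((b - 2 * complex_of_real x) * GE b x) + g' x * GE b x)) (at x)"
      unfolding F_def by (intro has_vector_derivative_mult der GE_deriv)
    then show ?thesis by (simp add: h_def algebra_simps)
  qed
  have ih: "integrable lborel (\<lambda>x. h x * GE b x)"
    by (rule EB_integrable[OF EBh ch])
  have "(LBINT x=-\<infinity>..\<infinity>. h x * GE b x) = 0 - 0"
  proof (rule interval_integral_FTC_integrable[where F = F])
    show "isCont (\<lambda>x. h x * GE b x) x" for x
      by (rule cont_isCont) (intro continuous_intros ch)
    show "set_integrable lborel (einterval (-\<infinity>) \<infinity>) (\<lambda>x. h x * GE b x)"
      using ih by (simp add: set_integrable_def einterval_eq_UNIV)
    show "((F \<circ> real_of_ereal) \<longlongrightarrow> 0) (at_right (-\<infinity>))"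
      unfolding ereal_tendsto_simps1 F_def by (rule EB_tendsto(2)[OF assms(2)])
    show "((F \<circ> real_of_ereal) \<longlongrightarrow> 0) (at_left \<infinity>)"
      unfolding ereal_tendsto_simps1 F_def by (rule EB_tendsto(1)[OF assms(2)])
  qed (auto intro: dF)
  then show ?thesis
    by (simp add: interval_lebesgue_integral_def set_lebesgue_integral_def einterval_eq_UNIV h_def)
qed



lemma EB_H: "EB (\<lambda>x. complex_of_real (hermite_poly l x))"
proof -
  obtain D where "D \<ge> 0" "\<And>x. \<bar>hermite_poly l x\<bar> \<le> D * exp (real l * \<bar>x\<bar>)"
    using H_bound[of l] by blast
  then show ?thesis by (rule EB_real)
qed

lemma EB_dH: "EB (\<lambda>x. complex_of_real (dH l x))"
proof -
  have "(\<lambda>x. complex_of_real (dH l x)) = (\<lambda>x. complex_of_real (2 * real l) * complex_of_real (hermite_poly (l - 1) x))"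
    by (simp add: dH_def)
  then show ?thesis using EB_mult[OF EB_const EB_H] by simp
qed

lemma cont_H: "continuous_on UNIV (\<lambda>x. complex_of_real (hermite_poly l x))"
  by (intro continuous_intros)

lemma cont_dH: "continuous_on UNIV (\<lambda>x. complex_of_real (dH l x))"
  unfolding dH_def by (intro continuous_intros)

lemma vderiv_H: "((\<lambda>x. complex_of_real (hermite_poly l x)) has_vector_derivative complex_of_real (dH l x)) (at x)"
  by (rule has_vector_derivative_of_real[OF H_deriv])

lemma J_step:
  "(\<integral>x. complex_of_real (hermite_poly (Suc l) x) * GE b x \<partial>lborel)
     = b * (\<integral>x. complex_of_real (hermite_poly l x) * GE b x \<partial>lborel)"
proof -
  define f where "f = (\<lambda>x. complex_of_real (hermite_poly l x) * GE b x)"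
  define g where "g = (\<lambda>x. (complex_of_real (dH l x) + (b - 2 * complex_of_real x) * complex_of_real (hermite_poly l x)) * GE b x)"
  have pt: "complex_of_real (hermite_poly (Suc l) x) * GE b x = b * f x - g x" for x
    unfolding f_def g_def H_rec by (simp add: algebra_simps)
  have intf: "integrable lborel f" unfolding f_def
    by (rule EB_integrable[OF EB_H cont_H])
  have intg: "integrable lborel g" unfolding g_def
    by (rule EB_integrable) (intro EB_add EB_mult EB_diff EB_const EB_x EB_H EB_dH continuous_intros cont_H cont_dH)+
  have g0: "integral\<^sup>L lborel g = 0" unfolding g_def
    by (rule ibp[OF vderiv_H EB_H EB_dH cont_H cont_dH])
  have "(\<integral>x. complex_of_real (hermite_poly (Suc l) x) * GE b x \<partial>lborel) = (\<integral>x. b * f x - g x \<partial>lborel)"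
    by (simp only: pt)
  also have "\<dots> = b * integral\<^sup>L lborel f - integral\<^sup>L lborel g"
    using intf intg by simp
  finally show ?thesis using g0 by (simp add: f_def)
qed

lemma J_formula:
  "(\<integral>x. complex_of_real (hermite_poly l x) * GE b x \<partial>lborel) = b ^ l * (complex_of_real (sqrt pi) * exp (b^2/4))"
proof (induction l)
  case 0
  then show ?case using gauss_complex(2)[of b] by (simp add: GE_def)
next
  case (Suc l)
  then show ?case by (simp add: J_step)
qed




definition KK :: "nat \<Rightarrow> real" where
  "KK l = (2 ^ l * fact l * sqrt pi) powr (-1/2) / sqrt (fact l)"

definition CC :: "nat \<Rightarrow> real" where
  "CC l = pi powr (-1/4) * KK l * sqrt pi"

lemma powr_mhalf: "(y::real) > 0 \<Longrightarrow> y powr (-1/2) = 1 / sqrt y"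
proof -
  assume y: "y > 0"
  have m: "-1/2 = -(1/2::real)" by simp
  have "y powr (-1/2) = 1 / y powr (1/2)" by (simp only: m powr_minus_divide)
  also have "\<dots> = 1 / sqrt y" by (simp only: powr_half_sqrt[OF less_imp_le[OF y]])
  finally show ?thesis .
qed

lemma field_step: "(r::real) > 0 \<Longrightarrow> X > 0 \<Longrightarrow> 1 / (sqrt 2 * r * sqrt X) / (r * sqrt f) * (r * r) * sqrt 2 = 1 / sqrt X / sqrt f"
  by (simp add: field_simps)

lemma KK_rel: "KK (Suc m) * real (Suc m) * sqrt 2 = KK m"
proof -
  define X where "X = 2 ^ m * fact m * sqrt pi"
  have Xpos: "X > 0" unfolding X_def by simp
  have e: "2 ^ Suc m * fact (Suc m) * sqrt pi = (2 * real (Suc m)) * X"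
    by (simp add: X_def algebra_simps)
  have f: "(fact (Suc m)::real) = real (Suc m) * fact m" by (rule fact_Suc)
  have k1': "KK (Suc m) = 1 / sqrt ((2 * real (Suc m)) * X) / sqrt (real (Suc m) * fact m)"
    unfolding KK_def e unfolding f by (subst powr_mhalf) (use Xpos in simp_all)
  have k1: "KK (Suc m) = 1 / (sqrt 2 * sqrt (real (Suc m)) * sqrt X) / (sqrt (real (Suc m)) * sqrt (fact m))"
    unfolding k1' by (simp only: real_sqrt_mult)
  have k0: "KK m = 1 / sqrt X / sqrt (fact m)"
    unfolding KK_def X_def[symmetric] by (simp only: powr_mhalf[OF Xpos])
  have s: "sqrt (real (Suc m)) * sqrt (real (Suc m)) = real (Suc m)"
    by simp
  define r where "r = sqrt (real (Suc m))"
  have rpos: "r > 0" unfolding r_def by simp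
  have "KK (Suc m) * real (Suc m) * sqrt 2 = 1 / (sqrt 2 * r * sqrt X) / (r * sqrt (fact m)) * (r * r) * sqrt 2"
    unfolding k1 r_def s ..
  also have "\<dots> = 1 / sqrt X / sqrt (fact m)"
    using rpos Xpos by (rule field_step)
  also have "\<dots> = KK m" unfolding k0 ..
  finally show ?thesis .
qed

lemma CC_rel: "l \<ge> 1 \<Longrightarrow> CC l * real l * sqrt 2 = CC (l - 1)"
proof -
  assume "l \<ge> 1"
  then obtain m where l: "l = Suc m" by (cases l) auto
  have "CC (Suc m) * real (Suc m) * sqrt 2 = pi powr (-1/4) * (KK (Suc m) * real (Suc m) * sqrt 2) * sqrt pi"
    unfolding CC_def by (simp only: mult_ac)
  also have "\<dots> = CC m" unfolding KK_rel CC_def ..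
  finally show ?thesis unfolding l by simp
qed

lemma exponent_eq:
  fixes z :: complex and a x :: real
  shows "- (z ^ 2 + complex_of_real (x ^ 2)) / 2 + complex_of_real (sqrt 2) * z * complex_of_real x
     + complex_of_real (-(x^2)/2) + \<i> * complex_of_real (a * x)
     = -(z^2)/2 + (- complex_of_real (x^2) + (complex_of_real (sqrt 2) * z + \<i> * complex_of_real a) * complex_of_real x)"
  by (simp add: field_simps)

lemma integrand_eq:
  fixes z :: complex and a x :: real
  shows "exp (- (z ^ 2 + complex_of_real (x ^ 2)) / 2 + complex_of_real (sqrt 2) * z * complex_of_real x) *
      (mod_hermite a l x / complex_of_real (sqrt (fact l)))
    = (complex_of_real (KK l) * exp (-(z^2)/2)) * (complex_of_real (hermite_poly l x) * GE (complex_of_real (sqrt 2) * z + \<i> * complex_of_real a) x)"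
proof -
  define A where "A = - (z ^ 2 + complex_of_real (x ^ 2)) / 2 + complex_of_real (sqrt 2) * z * complex_of_real x"
  define K where "K = (2 ^ l * fact l * sqrt pi) powr (-1/2 :: real)"
  have "exp A * (mod_hermite a l x / complex_of_real (sqrt (fact l)))
      = complex_of_real (K / sqrt (fact l)) * complex_of_real (hermite_poly l x) *
        (exp A * exp (complex_of_real (-(x^2)/2)) * exp (\<i> * complex_of_real (a * x)))"
    unfolding mod_hermite_def hermite_fun_def K_def exp_of_real
    by (simp add: field_simps)
  also have "exp A * exp (complex_of_real (-(x^2)/2)) * exp (\<i> * complex_of_real (a * x))
      = exp (-(z^2)/2) * GE (complex_of_real (sqrt 2) * z + \<i> * complex_of_real a) x"
    unfolding GE_def exp_add[symmetric] A_def exponent_eq ..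
  finally show ?thesis unfolding A_def KK_def K_def by (simp add: mult_ac)
qed


lemma Phi_closed:
  "Phi l a z = complex_of_real (CC l) *
     (exp (-(z^2)/2 + (complex_of_real (sqrt 2) * z + \<i> * complex_of_real a)^2/4) *
      (complex_of_real (sqrt 2) * z + \<i> * complex_of_real a) ^ l)"
proof -
  define b where "b = complex_of_real (sqrt 2) * z + \<i> * complex_of_real a"
  have "Phi l a z = complex_of_real (pi powr (-1/4)) *
      (\<integral>x. (complex_of_real (KK l) * exp (-(z^2)/2)) * (complex_of_real (hermite_poly l x) * GE b x) \<partial>lborel)"
    unfolding b_def by (simp only: Phi_def bargmann_def integrand_eq)
  also have "\<dots> = complex_of_real (pi powr (-1/4)) *
      ((complex_of_real (KK l) * exp (-(z^2)/2)) * (b ^ l * (complex_of_real (sqrt pi) * exp (b^2/4))))"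
    by (simp only: integral_mult_right_zero J_formula)
  also have "\<dots> = complex_of_real (CC l) * (exp (-(z^2)/2 + b^2/4) * b ^ l)"
    unfolding CC_def of_real_mult exp_add by (simp only: mult_ac)
  finally show ?thesis unfolding b_def .
qed

lemma sqrt2_identity:
  fixes z :: complex and a :: real
  shows "- z + (complex_of_real (sqrt 2) * z + \<i> * complex_of_real a) * complex_of_real (sqrt 2) / 2
     = \<i> * complex_of_real (a / sqrt 2)"
proof -
  have s2: "complex_of_real (sqrt 2) * complex_of_real (sqrt 2) = 2"
    by (simp flip: of_real_mult)
  have a2: "complex_of_real (a / sqrt 2) = complex_of_real a * complex_of_real (sqrt 2) / 2"
  proof -
    have "a / sqrt 2 = a * sqrt 2 / 2" by (simp add: field_simps)
    then have "complex_of_real (a / sqrt 2) = complex_of_real (a * sqrt 2 / 2)" by (rule arg_cong)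
    also have "\<dots> = complex_of_real a * complex_of_real (sqrt 2) / 2" by simp
    finally show ?thesis .
  qed
  have "(complex_of_real (sqrt 2) * z + \<i> * complex_of_real a) * complex_of_real (sqrt 2) / 2
      = (complex_of_real (sqrt 2) * complex_of_real (sqrt 2)) * z / 2 + \<i> * (complex_of_real a * complex_of_real (sqrt 2) / 2)"
    by (simp add: algebra_simps add_divide_distrib)
  also have "\<dots> = z + \<i> * complex_of_real (a / sqrt 2)" unfolding s2 a2 by simp
  finally have h: "(complex_of_real (sqrt 2) * z + \<i> * complex_of_real a) * complex_of_real (sqrt 2) / 2
      = z + \<i> * complex_of_real (a / sqrt 2)" .
  show ?thesis by (simp only: h) simp
qed

theorem theorem3p26:
  fixes a :: real and l :: nat and z :: complex
  assumes "a > 1" and "l \<ge> 1"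
  shows "Phi l a field_differentiable (at z) \<and>
         deriv (Phi l a) z - \<i> * complex_of_real (a / sqrt 2) * Phi l a z = Phi (l - 1) a z"
proof -
  define B where "B = (\<lambda>z::complex. complex_of_real (sqrt 2) * z + \<i> * complex_of_real a)"
  define E where "E = (\<lambda>z::complex. -(z^2)/2 + (B z)^2/4)"
  have PhiEq: "Phi k a = (\<lambda>z. complex_of_real (CC k) * (exp (E z) * (B z) ^ k))" for k
    by (rule ext) (simp only: Phi_closed E_def B_def)
  have dB: "(B has_field_derivative complex_of_real (sqrt 2)) (at w)" for w
    unfolding B_def by (auto intro!: derivative_eq_intros)
  have dE: "(E has_field_derivative \<i> * complex_of_real (a / sqrt 2)) (at w)" for w
  proof -
    have "(E has_field_derivative (- w + B w * complex_of_real (sqrt 2) / 2)) (at w)"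
      unfolding E_def by (auto intro!: derivative_eq_intros dB simp: field_simps)
    also have "- w + B w * complex_of_real (sqrt 2) / 2 = \<i> * complex_of_real (a / sqrt 2)"
      unfolding B_def by (rule sqrt2_identity)
    finally show ?thesis .
  qed
  define D where "D = complex_of_real (CC l) * (exp (E z) * (\<i> * complex_of_real (a / sqrt 2)) * (B z) ^ l
       + exp (E z) * (of_nat l * (B z) ^ (l - 1) * complex_of_real (sqrt 2)))"
  have dPhi: "(Phi l a has_field_derivative D) (at z)"
    unfolding PhiEq D_def by (auto intro!: derivative_eq_intros dE dB simp: algebra_simps)
  have c: "complex_of_real (CC (l - 1)) = complex_of_real (CC l) * of_nat l * complex_of_real (sqrt 2)"
    using CC_rel[OF assms(2)] by (metis of_real_mult of_real_of_nat_eq)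
  have "deriv (Phi l a) z = D" by (rule DERIV_imp_deriv[OF dPhi])
  moreover have "D - \<i> * complex_of_real (a / sqrt 2) * Phi l a z = Phi (l - 1) a z"
    unfolding D_def PhiEq c by (simp add: algebra_simps)
  moreover have "Phi l a field_differentiable (at z)"
    using dPhi field_differentiable_def by blast
  ultimately show ?thesis by simp
qed


end
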